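(* Let $m,n>0$, let $f$ and $g$ be concave positive real functions on $[0,m]$ and $[0,n]$ respectively, and let $A=\{(x,y): 0\le x\le m,\ 0\le y\le f(x)\}$ and $B=\{(x,y): 0\le x\le n,\ 0\le y\le g(x)\}$. Let $k\ge1$, let $0=x_0<x_1<\cdots<x_k=m$ and $0=x'_0<x'_1<\cdots<x'_k=n$ be the partitions of $[0,m]$ and $[0,n]$ into $k$ equal parts, and for $i=1,\dots,k$ let $$A_i=\{(x,y): x_{i-1}\le x\le x_i,\ 0\le y\le f(x)\},\qquad B_i=\{(x,y): x'_{i-1}\le x\le x'_i,\ 0\le y\le g(x)\}.$$ If $|A+B|=\left(\frac{|A|}{m}+\frac{|B|}{n}\right)(m+n)$, then for every $i=1,\dots,k$, $$|A_i+B_i|=\left(\frac{|A_i|}{m/k}+\frac{|B_i|}{n/k}\right)\left(\frac{m}{k}+\frac{n}{k}\right).$$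
   Context: $|X|$ denotes area; $A+B$ is the Minkowski sum. *)

theory Defs
  imports "HOL-Analysis.Analysis"
begin

definition minksum :: "(real \<times> real) set \<Rightarrow> (real \<times> real) set \<Rightarrow> (real \<times> real) set" where
  "minksum A B = {a + b | a b. a \<in> A \<and> b \<in> B}"

definition area :: "(real \<times> real) set \<Rightarrow> real" where
  "area S = measure lebesgue S"

definition hypo :: "(real \<Rightarrow> real) \<Rightarrow> real \<Rightarrow> real \<Rightarrow> (real \<times> real) set" where
  "hypo f a b = {(x, y). a \<le> x \<and> x \<le> b \<and> 0 \<le> y \<and> y \<le> f x}"

end

theory Submission
  imports Defs
begin

lemma hypo_borel:
  fixes h :: "real \<Rightarrow> real"
  assumes [measurable]: "(\<lambda>x. indicator {p..q} x * h x) \<in> borel_measurable borel"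
  shows "hypo h p q \<in> sets (borel :: (real\<times>real) measure)"
proof -
  let ?H = "\<lambda>x. indicator {p..q} x * h x"
  have "hypo h p q = {z \<in> space (borel \<Otimes>\<^sub>M borel). fst z \<in> {p..q} \<and> 0 \<le> snd z \<and> snd z \<le> ?H (fst z)}"
    by (auto simp: hypo_def space_pair_measure)
  also have "\<dots> \<in> sets (borel \<Otimes>\<^sub>M borel)" by measurable
  finally show ?thesis by (subst (asm) borel_prod)
qed

lemma area_hypo_gen:
  fixes h :: "real \<Rightarrow> real"
  assumes meas[measurable]: "(\<lambda>x. indicator {p..q} x * h x) \<in> borel_measurable borel"
    and bnd: "\<And>x. x \<in> {p..q} \<Longrightarrow> 0 \<le> h x \<and> h x \<le> C"
  shows "(h has_integral area (hypo h p q)) {p..q}"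
proof -
  let ?H = "\<lambda>x. indicator {p..q} x * h x"
  have S: "hypo h p q \<in> sets (borel :: (real\<times>real) measure)" by (rule hypo_borel[OF meas])
  have C0: "0 \<le> C" if "p \<le> q" using bnd[of p] that by auto
  have int: "integrable lborel ?H"
  proof (rule Bochner_Integration.integrable_bound)
    show "integrable lborel (\<lambda>x. C * indicator {p..q} x :: real)"
      by (intro integrable_mult_right integrable_real_indicator) (auto simp: emeasure_lborel_Icc_eq)
    show "?H \<in> borel_measurable lborel" by simp
    show "AE x in lborel. norm (?H x) \<le> norm (C * indicator {p..q} x :: real)"
      using bnd C0 by (auto simp: indicator_def)
  qed
  have hi: "(?H has_integral integral\<^sup>L lborel ?H) UNIV" by (rule has_integral_integral_lborel[OF int])
  have "emeasure (lborel \<Otimes>\<^sub>M lborel) (hypo h p q) = (\<integral>\<^sup>+x. emeasure lborel (Pair x -` hypo h p q) \<partial>lborel)"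
    by (rule lborel.emeasure_pair_measure_alt) (unfold lborel_prod, use S in simp)
  also have "\<dots> = (\<integral>\<^sup>+x. ennreal (?H x) \<partial>lborel)"
  proof (rule nn_integral_cong)
    fix x :: real
    show "emeasure lborel (Pair x -` hypo h p q) = ennreal (?H x)"
    proof (cases "x \<in> {p..q}")
      case True
      then have "Pair x -` hypo h p q = {0..h x}" by (auto simp: hypo_def)
      then show ?thesis using True bnd by (simp add: indicator_def)
    next
      case False
      then have "Pair x -` hypo h p q = {}" by (auto simp: hypo_def)
      then show ?thesis using False by (auto simp: indicator_def)
    qed
  qed
  also have "\<dots> = ennreal (integral\<^sup>L lborel ?H)"
    by (rule nn_integral_eq_integral[OF int]) (use bnd in \<open>auto simp: indicator_def\<close>)
  finally have E: "emeasure lborel (hypo h p q) = ennreal (integral\<^sup>L lborel ?H)"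
    by (simp add: lborel_prod)
  have I0: "0 \<le> integral\<^sup>L lborel ?H"
    by (rule integral_nonneg_AE) (use bnd in \<open>auto simp: indicator_def\<close>)
  have "area (hypo h p q) = measure lborel (hypo h p q)"
    unfolding area_def using S by simp
  also have "\<dots> = integral\<^sup>L lborel ?H" using E I0 by (simp add: measure_def)
  finally have "area (hypo h p q) = integral\<^sup>L lborel ?H" .
  moreover have eq: "(\<lambda>x. if x \<in> {p..q} then h x else 0) = ?H"
    by (auto simp: indicator_def fun_eq_iff)
  ultimately have "((\<lambda>x. if x \<in> {p..q} then h x else 0) has_integral area (hypo h p q)) UNIV"
    using hi by metis
  then show ?thesis by (simp only: has_integral_restrict_UNIV)
qed


lemma affine_int:
  fixes f :: "real \<Rightarrow> real"
  assumes "(f has_integral I) {a..b}" "\<beta> > 0"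
  shows "((\<lambda>z. f (a + (z - p)*\<beta>)) has_integral I/\<beta>) {p .. p + (b-a)/\<beta>}"
proof -
  have H: "((\<lambda>x. f (\<beta> *\<^sub>R x + (a - p*\<beta>))) has_integral (I /\<^sub>R \<beta> ^ DIM(real)))
           (cbox ((a - (a - p*\<beta>)) /\<^sub>R \<beta>) ((b - (a - p*\<beta>)) /\<^sub>R \<beta>))"
    using assms by (intro has_integral_affinity') auto
  have e1: "cbox ((a - (a - p*\<beta>)) /\<^sub>R \<beta>) ((b - (a - p*\<beta>)) /\<^sub>R \<beta>) = {p .. p + (b-a)/\<beta>}"
    using assms(2) by (simp add: field_simps)
  have e2: "(\<lambda>x. f (\<beta> *\<^sub>R x + (a - p*\<beta>))) = (\<lambda>z. f (a + (z - p)*\<beta>))"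
    by (auto simp: fun_eq_iff algebra_simps)
  have e3: "I /\<^sub>R \<beta> ^ DIM(real) = I/\<beta>" by (simp add: divide_inverse)
  show ?thesis using H unfolding e1 e2 e3 .
qed

lemma concave_affine:
  fixes f :: "real \<Rightarrow> real"
  assumes "concave_on {a..b} f" "\<beta> > 0" "a + (q - p)*\<beta> \<le> b"
  shows "concave_on {p..q} (\<lambda>z. f (a + (z - p)*\<beta>))"
  unfolding concave_on_iff
proof (intro conjI ballI allI impI)
  show "convex {p..q}" by simp
  fix x y u v :: real
  assume xy: "x \<in> {p..q}" "y \<in> {p..q}" and uv: "0 \<le> u" "0 \<le> v" "u + v = 1"
  have mx: "a + (x - p)*\<beta> \<in> {a..b}" using xy assms(2,3)
    by (auto intro!: order.trans[OF _ assms(3)] mult_right_mono)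
  have my: "a + (y - p)*\<beta> \<in> {a..b}" using xy assms(2,3)
    by (auto intro!: order.trans[OF _ assms(3)] mult_right_mono)
  have v: "v = 1 - u" using uv by simp
  have eq: "a + (u *\<^sub>R x + v *\<^sub>R y - p)*\<beta> = u *\<^sub>R (a + (x - p)*\<beta>) + v *\<^sub>R (a + (y - p)*\<beta>)"
    unfolding v by (simp add: algebra_simps)
  show "u * f (a + (x - p)*\<beta>) + v * f (a + (y - p)*\<beta>) \<le> f (a + (u *\<^sub>R x + v *\<^sub>R y - p)*\<beta>)"
    unfolding eq using assms(1) mx my uv unfolding concave_on_iff by blast
qed

lemma concave_props:
  fixes h :: "real \<Rightarrow> real"
  assumes pq: "p < q" and cc: "concave_on {p..q} h" and pos: "\<forall>x\<in>{p..q}. h x > 0"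
  shows "(\<lambda>x. indicator {p..q} x * h x) \<in> borel_measurable borel"
    and "\<forall>x\<in>{p..q}. h x \<le> 2 * h ((p+q)/2)"
    and "convex (hypo h p q)"
proof -
  have "convex_on {p<..<q} (\<lambda>x. - h x)"
    using cc unfolding concave_on_def by (rule convex_on_subset) auto
  then have "continuous_on {p<..<q} (\<lambda>x. - h x)" by (intro convex_on_continuous) auto
  then have c: "continuous_on {p<..<q} h"
    using continuous_on_minus[of "{p<..<q}" "\<lambda>x. - h x"] by simp
  have m1: "(\<lambda>x. indicator {p<..<q} x *\<^sub>R h x) \<in> borel_measurable borel"
    by (rule borel_measurable_continuous_on_indicator[OF _ c]) auto
  have eq: "(\<lambda>x. indicator {p..q} x * h x) =
     (\<lambda>x. indicator {p<..<q} x *\<^sub>R h x + indicator {p} x * h p + indicator {q} x * h q)"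
    using pq by (auto simp: fun_eq_iff indicator_def)
  show "(\<lambda>x. indicator {p..q} x * h x) \<in> borel_measurable borel"
    unfolding eq using m1 by measurable
  show "\<forall>x\<in>{p..q}. h x \<le> 2 * h ((p+q)/2)"
  proof
    fix x assume x: "x \<in> {p..q}"
    have y: "p + q - x \<in> {p..q}" using x by auto
    have A: "(1 - 1/2) * h x + (1/2) * h (p+q-x) \<le> h ((1 - 1/2) *\<^sub>R x + (1/2) *\<^sub>R (p+q-x))"
      using concave_onD[OF cc, of "1/2" x "p+q-x"] x y by simp
    have B: "(1 - 1/2) *\<^sub>R x + (1/2) *\<^sub>R (p+q-x) = (p+q)/2" by (simp add: field_simps)
    have "(1 - 1/2) * h x + (1/2) * h (p+q-x) \<le> h ((p+q)/2)" using A unfolding B .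
    moreover have "h (p+q-x) > 0" using pos y by auto
    ultimately show "h x \<le> 2 * h ((p+q)/2)" by (simp add: field_simps)
  qed
  show "convex (hypo h p q)"
    unfolding convex_alt
  proof (intro ballI allI impI)
    fix z w :: "real \<times> real" and u :: real
    assume z: "z \<in> hypo h p q" and w: "w \<in> hypo h p q" and u: "0 \<le> u \<and> u \<le> 1"
    obtain x1 y1 where z1: "z = (x1,y1)" "p \<le> x1" "x1 \<le> q" "0 \<le> y1" "y1 \<le> h x1" using z by (auto simp: hypo_def)
    obtain x2 y2 where w1: "w = (x2,y2)" "p \<le> x2" "x2 \<le> q" "0 \<le> y2" "y2 \<le> h x2" using w by (auto simp: hypo_def)
    have "(1-u) * h x1 + u * h x2 \<le> h ((1-u) *\<^sub>R x1 + u *\<^sub>R x2)"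
      using cc z1 w1 u unfolding concave_on_iff by auto
    moreover have "(1-u) * y1 + u * y2 \<le> (1-u) * h x1 + u * h x2"
      using u z1 w1 by (intro add_mono mult_left_mono) auto
    moreover have "p \<le> (1-u) * x1 + u * x2" "(1-u) * x1 + u * x2 \<le> q"
      using u z1 w1 convex_bound_le[of x1 q x2 "1-u" u] convex_bound_le[of "-x1" "-p" "-x2" "1-u" u]
      by (auto simp: algebra_simps)
    moreover have "0 \<le> (1-u) * y1 + u * y2" using u z1 w1 by auto
    ultimately show "(1 - u) *\<^sub>R z + u *\<^sub>R w \<in> hypo h p q"
      using z1 w1 by (auto simp: hypo_def)
  qed
qed


lemma minksum_eq: "minksum A B = (\<Union>x\<in>A. \<Union>y\<in>B. {x + y})"
  unfolding minksum_def by blast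

lemma piece:
  fixes f g :: "real \<Rightarrow> real" and a b c d :: real
  assumes ab: "a < b" and cd: "c < d"
    and cf: "concave_on {a..b} f" and pf: "\<forall>x\<in>{a..b}. f x > 0"
    and cg: "concave_on {c..d} g" and pg: "\<forall>x\<in>{c..d}. g x > 0"
  shows "minksum (hypo f a b) (hypo g c d) \<in> lmeasurable"
    and "(area (hypo f a b)/(b-a) + area (hypo g c d)/(d-c)) * ((b-a)+(d-c))
           \<le> area (minksum (hypo f a b) (hypo g c d))"
    and "minksum (hypo f a b) (hypo g c d) \<subseteq> {z. a+c \<le> fst z \<and> fst z \<le> b+d}"
proof -
  define L where "L = b - a"
  define N where "N = d - c"
  define T where "T = L + N"
  define p where "p = a + c"
  define q where "q = b + d"
  have L: "L > 0" and N: "N > 0" and T: "T > 0" using ab cd by (auto simp: L_def N_def T_def)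
  define \<beta> where "\<beta> = L / T"
  define \<gamma> where "\<gamma> = N / T"
  have \<beta>: "\<beta> > 0" and \<gamma>: "\<gamma> > 0" using L N T by (auto simp: \<beta>_def \<gamma>_def)
  have bg1: "\<beta> + \<gamma> = 1"
  proof -
    have "\<beta> + \<gamma> = (L + N) / T" unfolding \<beta>_def \<gamma>_def by (simp add: add_divide_distrib)
    then show ?thesis using T by (simp add: T_def)
  qed
  have qp: "q - p = T" by (simp add: q_def p_def T_def L_def N_def)
  define F where "F z = f (a + (z - p)*\<beta>)" for z
  define G where "G z = g (c + (z - p)*\<gamma>)" for z
  define h where "h z = F z + G z" for z
  have eb: "a + (q - p)*\<beta> = b" using T by (simp add: qp \<beta>_def L_def)
  have ed: "c + (q - p)*\<gamma> = d" using T by (simp add: qp \<gamma>_def N_def)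
  have inF: "a + (z - p)*\<beta> \<in> {a..b}" if "z \<in> {p..q}" for z
  proof -
    have "(z - p)*\<beta> \<le> (q-p)*\<beta>" using that \<beta> by (intro mult_right_mono) auto
    then show ?thesis using that \<beta> eb by auto
  qed
  have inG: "c + (z - p)*\<gamma> \<in> {c..d}" if "z \<in> {p..q}" for z
  proof -
    have "(z - p)*\<gamma> \<le> (q-p)*\<gamma>" using that \<gamma> by (intro mult_right_mono) auto
    then show ?thesis using that \<gamma> ed by auto
  qed
  have pq: "p < q" using qp T by simp
  have ccF: "concave_on {p..q} F" unfolding F_def
    by (rule concave_affine[OF cf \<beta>]) (simp add: eb)
  have ccG: "concave_on {p..q} G" unfolding G_def
    by (rule concave_affine[OF cg \<gamma>]) (simp add: ed)
  have cch: "concave_on {p..q} h" unfolding h_def by (rule concave_on_add[OF ccF ccG])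
  have ph: "\<forall>z\<in>{p..q}. h z > 0"
    using inF inG pf pg by (auto simp: h_def F_def G_def intro!: add_pos_pos)
  note hp = concave_props[OF pq cch ph]
  note fp = concave_props[OF ab cf pf]
  note gp = concave_props[OF cd cg pg]
  have IA: "(f has_integral area (hypo f a b)) {a..b}"
    by (rule area_hypo_gen[OF fp(1)]) (use fp(2) pf in \<open>auto intro: less_imp_le\<close>)
  have IB: "(g has_integral area (hypo g c d)) {c..d}"
    by (rule area_hypo_gen[OF gp(1)]) (use gp(2) pg in \<open>auto intro: less_imp_le\<close>)
  have Ih: "(h has_integral area (hypo h p q)) {p..q}"
    by (rule area_hypo_gen[OF hp(1)]) (use hp(2) ph in \<open>auto intro: less_imp_le\<close>)
  have e1: "p + (b - a)/\<beta> = q" using L T qp by (simp add: \<beta>_def L_def)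
  have e2: "p + (d - c)/\<gamma> = q" using N T qp by (simp add: \<gamma>_def N_def)
  have IF: "(F has_integral area (hypo f a b)/\<beta>) {p..q}"
    using affine_int[OF IA \<beta>, of p] unfolding e1 F_def .
  have IG: "(G has_integral area (hypo g c d)/\<gamma>) {p..q}"
    using affine_int[OF IB \<gamma>, of p] unfolding e2 G_def .
  have Ih2: "(h has_integral area (hypo f a b)/\<beta> + area (hypo g c d)/\<gamma>) {p..q}"
    unfolding h_def by (rule has_integral_add[OF IF IG])
  have areaS: "area (hypo h p q) = (area (hypo f a b)/(b-a) + area (hypo g c d)/(d-c)) * ((b-a)+(d-c))"
  proof -
    have "area (hypo h p q) = area (hypo f a b)/\<beta> + area (hypo g c d)/\<gamma>"
      using has_integral_unique[OF Ih Ih2] .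
    also have "\<dots> = (area (hypo f a b)/(b-a) + area (hypo g c d)/(d-c)) * ((b-a)+(d-c))"
      using L N T unfolding \<beta>_def \<gamma>_def T_def L_def N_def by (simp add: field_simps)
    finally show ?thesis .
  qed
  have sub: "hypo h p q \<subseteq> minksum (hypo f a b) (hypo g c d)"
  proof
    fix w assume "w \<in> hypo h p q"
    then obtain z y where w: "w = (z,y)" "p \<le> z" "z \<le> q" "0 \<le> y" "y \<le> h z"
      by (auto simp: hypo_def)
    define x1 where "x1 = a + (z - p)*\<beta>"
    define x2 where "x2 = c + (z - p)*\<gamma>"
    define y1 where "y1 = min y (f x1)"
    define y2 where "y2 = y - y1"
    have x1: "x1 \<in> {a..b}" using inF w by (simp add: x1_def)
    have x2: "x2 \<in> {c..d}" using inG w by (simp add: x2_def)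
    have "x1 + x2 = z"
    proof -
      have "x1 + x2 = p + (z - p)*(\<beta>+\<gamma>)" by (simp add: x1_def x2_def p_def algebra_simps)
      then show ?thesis using bg1 by simp
    qed
    moreover have "y1 + y2 = y" by (simp add: y2_def)
    moreover have "(x1, y1) \<in> hypo f a b"
      using x1 w pf by (auto simp: hypo_def y1_def intro: less_imp_le)
    have gx2: "g x2 > 0" using x2 pg by auto
    have "y2 \<le> g x2" unfolding y2_def y1_def using w gx2 by (auto simp: h_def F_def G_def x1_def x2_def min_def)
    moreover have "0 \<le> y2" unfolding y2_def y1_def by auto
    ultimately have "(x2, y2) \<in> hypo g c d"
      using x2 by (auto simp: hypo_def)
    moreover note \<open>(x1, y1) \<in> hypo f a b\<close> \<open>x1 + x2 = z\<close> \<open>y1 + y2 = y\<close>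
    ultimately show "w \<in> minksum (hypo f a b) (hypo g c d)"
      unfolding minksum_def w by (auto intro!: exI[of _ "(x1,y1)"] exI[of _ "(x2,y2)"])
  qed
  define Cf where "Cf = 2 * f ((a+b)/2)"
  define Cg where "Cg = 2 * g ((c+d)/2)"
  show box: "minksum (hypo f a b) (hypo g c d) \<subseteq> {z. a+c \<le> fst z \<and> fst z \<le> b+d}"
    by (auto simp: minksum_def hypo_def)
  have bnd: "minksum (hypo f a b) (hypo g c d) \<subseteq> cbox (a+c, 0) (b+d, Cf + Cg)"
  proof
    fix w assume "w \<in> minksum (hypo f a b) (hypo g c d)"
    then obtain x1 y1 x2 y2 where w: "w = (x1+x2, y1+y2)" "(x1,y1) \<in> hypo f a b" "(x2,y2) \<in> hypo g c d"
      unfolding minksum_def by force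
    then have "y1 \<le> Cf" "y2 \<le> Cg" using fp(2) gp(2) unfolding hypo_def Cf_def Cg_def
      by (fastforce intro: order.trans)+
    then show "w \<in> cbox (a+c, 0) (b+d, Cf + Cg)"
      using w by (auto simp: hypo_def cbox_Pair_iff)
  qed
  show meas: "minksum (hypo f a b) (hypo g c d) \<in> lmeasurable"
  proof (rule measurable_convex)
    show "convex (minksum (hypo f a b) (hypo g c d))"
      unfolding minksum_eq by (rule convex_sums[OF fp(3) gp(3)])
    show "bounded (minksum (hypo f a b) (hypo g c d))"
      using bnd bounded_cbox bounded_subset by blast
  qed
  have "hypo h p q \<in> sets lebesgue"
    using hypo_borel[OF hp(1)] by auto
  then have "area (hypo h p q) \<le> area (minksum (hypo f a b) (hypo g c d))"
    unfolding area_def by (rule measure_mono_fmeasurable[OF sub _ meas])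
  then show "(area (hypo f a b)/(b-a) + area (hypo g c d)/(d-c)) * ((b-a)+(d-c))
           \<le> area (minksum (hypo f a b) (hypo g c d))" using areaS by simp
qed


lemma sum_integral_parts:
  fixes f :: "real \<Rightarrow> real"
  assumes int: "f integrable_on {0..m}" and m: "m \<ge> 0" and k: "k \<ge> 1" and j: "j \<le> k"
  shows "(\<Sum>i\<in>{1..j}. integral {(real i - 1) * m / real k .. real i * m / real k} f)
         = integral {0 .. real j * m / real k} f"
  using j
proof (induction j)
  case 0
  then show ?case by simp
next
  case (Suc j)
  have kpos: "real k > 0" using k by simp
  have le1: "0 \<le> real j * m / real k" using m kpos by simp
  have le2: "real j * m / real k \<le> real (Suc j) * m / real k"
    using m kpos by (intro divide_right_mono mult_right_mono) auto
  have le3: "real (Suc j) * m / real k \<le> m"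
  proof -
    have "real (Suc j) * m \<le> real k * m" using Suc.prems m by (intro mult_right_mono) auto
    then show ?thesis using kpos by (simp add: divide_le_eq mult.commute)
  qed
  have intj: "f integrable_on {0 .. real (Suc j) * m / real k}"
    by (rule integrable_on_subinterval[OF int]) (use le1 le2 le3 in auto)
  have "(\<Sum>i\<in>{1..Suc j}. integral {(real i - 1) * m / real k .. real i * m / real k} f)
      = integral {0 .. real j * m / real k} f + integral {real j * m / real k .. real (Suc j) * m / real k} f"
    using Suc by (simp add: sum.atLeast1_atMost_eq)
  also have "\<dots> = integral {0 .. real (Suc j) * m / real k} f"
    by (rule Henstock_Kurzweil_Integration.integral_combine[OF le1 le2 intj])
  finally show ?case .
qed


lemma area_int:
  fixes f :: "real \<Rightarrow> real"
  assumes "a < b" "concave_on {a..b} f" "\<forall>x\<in>{a..b}. f x > 0"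
  shows "(f has_integral area (hypo f a b)) {a..b}"
proof -
  note fp = concave_props[OF assms]
  show ?thesis
    by (rule area_hypo_gen[OF fp(1)]) (use fp(2) assms(3) in \<open>auto intro: less_imp_le\<close>)
qed

lemma concave_sub:
  assumes "concave_on S f" "T \<subseteq> S" "convex T"
  shows "concave_on T f"
  using assms unfolding concave_on_def by (rule convex_on_subset)

theorem lemma4p6:
  fixes m n :: real and f g :: "real \<Rightarrow> real" and k :: nat
  assumes "m > 0" and "n > 0"
    and "concave_on {0..m} f" and "\<forall>x\<in>{0..m}. f x > 0"
    and "concave_on {0..n} g" and "\<forall>x\<in>{0..n}. g x > 0"
    and "k \<ge> 1"
    and "area (minksum (hypo f 0 m) (hypo g 0 n))
         = (area (hypo f 0 m) / m + area (hypo g 0 n) / n) * (m + n)"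
  shows "\<forall>i\<in>{1..k}.
    area (minksum (hypo f ((real i - 1) * m / real k) (real i * m / real k))
                  (hypo g ((real i - 1) * n / real k) (real i * n / real k)))
    = (area (hypo f ((real i - 1) * m / real k) (real i * m / real k)) / (m / real k)
       + area (hypo g ((real i - 1) * n / real k) (real i * n / real k)) / (n / real k))
      * (m / real k + n / real k)"
proof -
  note mp = assms(1) and np = assms(2) and cf = assms(3) and pf = assms(4)
    and cg = assms(5) and pg = assms(6) and k1 = assms(7) and hyp = assms(8)
  have kpos: "real k > 0" using k1 by simp
  define a where "a = (\<lambda>i::nat. (real i - 1) * m / real k)"
  define b where "b = (\<lambda>i::nat. real i * m / real k)"
  define c where "c = (\<lambda>i::nat. (real i - 1) * n / real k)"
  define d where "d = (\<lambda>i::nat. real i * n / real k)"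
  define P where "P = (\<lambda>i. minksum (hypo f (a i) (b i)) (hypo g (c i) (d i)))"
  define R where "R = (\<lambda>i. (area (hypo f (a i) (b i)) / (m / real k)
       + area (hypo g (c i) (d i)) / (n / real k)) * (m / real k + n / real k))"
  have ba: "b i - a i = m / real k" for i unfolding a_def b_def using kpos by (simp add: field_simps)
  have dc: "d i - c i = n / real k" for i unfolding c_def d_def using kpos by (simp add: field_simps)
  have mk: "m / real k > 0" and nk: "n / real k > 0" using mp np kpos by auto
  have ab: "a i < b i" for i using ba[of i] mk by linarith
  have cd: "c i < d i" for i using dc[of i] nk by linarith
  have a0: "0 \<le> a i" if "i \<in> {1..k}" for i using that mp kpos unfolding a_def by auto
  have c0: "0 \<le> c i" if "i \<in> {1..k}" for i using that np kpos unfolding c_def by auto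
  have bm: "b i \<le> m" if "i \<in> {1..k}" for i
  proof -
    have "real i * m \<le> real k * m" using that mp by (intro mult_right_mono) auto
    then show ?thesis using kpos unfolding b_def by (simp add: divide_le_eq mult.commute)
  qed
  have dn: "d i \<le> n" if "i \<in> {1..k}" for i
  proof -
    have "real i * n \<le> real k * n" using that np by (intro mult_right_mono) auto
    then show ?thesis using kpos unfolding d_def by (simp add: divide_le_eq mult.commute)
  qed
  have subf: "{a i..b i} \<subseteq> {0..m}" if "i \<in> {1..k}" for i using a0 bm that by auto
  have subg: "{c i..d i} \<subseteq> {0..n}" if "i \<in> {1..k}" for i using c0 dn that by auto
  have cfi: "concave_on {a i..b i} f" if "i \<in> {1..k}" for i
    using concave_sub[OF cf subf[OF that]] by simp
  have cgi: "concave_on {c i..d i} g" if "i \<in> {1..k}" for i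
    using concave_sub[OF cg subg[OF that]] by simp
  have pfi: "\<forall>x\<in>{a i..b i}. f x > 0" if "i \<in> {1..k}" for i using subf[OF that] pf by auto
  have pgi: "\<forall>x\<in>{c i..d i}. g x > 0" if "i \<in> {1..k}" for i using subg[OF that] pg by auto
  have Pm: "P i \<in> lmeasurable" if "i \<in> {1..k}" for i using piece(1)[OF ab cd cfi[OF that] pfi[OF that] cgi[OF that] pgi[OF that]] by (simp add: P_def)
  have PR: "R i \<le> area (P i)" if "i \<in> {1..k}" for i
    using piece(2)[OF ab cd cfi[OF that] pfi[OF that] cgi[OF that] pgi[OF that]] by (simp add: P_def R_def ba dc)
  have Pbox: "P i \<subseteq> {z. a i + c i \<le> fst z \<and> fst z \<le> b i + d i}" if "i \<in> {1..k}" for i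
    using piece(3)[OF ab cd cfi[OF that] pfi[OF that] cgi[OF that] pgi[OF that]] by (simp add: P_def)
  note whole = piece[OF mp np cf pf cg pg]
  have Wm: "minksum (hypo f 0 m) (hypo g 0 n) \<in> lmeasurable"
    using whole(1) by simp
  have PU: "(\<Union>i\<in>{1..k}. P i) \<subseteq> minksum (hypo f 0 m) (hypo g 0 n)"
  proof -
    have "P i \<subseteq> minksum (hypo f 0 m) (hypo g 0 n)" if "i \<in> {1..k}" for i
      using subf[OF that] subg[OF that] unfolding P_def minksum_def hypo_def by fastforce
    then show ?thesis by blast
  qed
  have neg: "pairwise (\<lambda>i j. negligible (P i \<inter> P j)) {1..k}"
  proof -
    have *: "negligible (P i \<inter> P j)" if "i \<in> {1..k}" "j \<in> {1..k}" "i < j" for i j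
    proof -
      have "b i + d i \<le> a j + c j"
      proof -
        have "real i \<le> real j - 1" using that(3) by linarith
        then have "real i * (m + n) \<le> (real j - 1) * (m+n)" using mp np by (intro mult_right_mono) auto
        then show ?thesis unfolding a_def b_def c_def d_def using kpos
          by (simp add: add_divide_distrib[symmetric] divide_right_mono algebra_simps)
      qed
      then have "P i \<inter> P j \<subseteq> {z. (1::real, 0::real) \<bullet> z = b i + d i}"
        using Pbox[OF that(1)] Pbox[OF that(2)] by fastforce
      moreover have "negligible {z. (1::real, 0::real) \<bullet> z = b i + d i}"
        by (rule negligible_hyperplane) (simp add: zero_prod_def)
      ultimately show ?thesis using negligible_subset by blast
    qed
    show ?thesis unfolding pairwise_def
      by (metis * Int_commute linorder_neqE_nat)
  qed
  have sumP: "(\<Sum>i\<in>{1..k}. area (P i)) \<le> area (minksum (hypo f 0 m) (hypo g 0 n))"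
  proof -
    have "(\<Sum>i\<in>{1..k}. area (P i)) = measure lebesgue (\<Union>i\<in>{1..k}. P i)"
      unfolding area_def by (rule measure_negligible_finite_Union_image[symmetric]) (use Pm neg in auto)
    also have "\<dots> \<le> area (minksum (hypo f 0 m) (hypo g 0 n))"
      unfolding area_def
      by (rule measure_mono_fmeasurable[OF PU _ Wm]) (use Pm in auto)
    finally show ?thesis .
  qed
  have IA: "(f has_integral area (hypo f 0 m)) {0..m}" by (rule area_int[OF mp cf pf])
  have IB: "(g has_integral area (hypo g 0 n)) {0..n}" by (rule area_int[OF np cg pg])
  have Ai: "area (hypo f (a i) (b i)) = integral {a i..b i} f" if "i \<in> {1..k}" for i
    using integral_unique[OF area_int[OF ab cfi[OF that] pfi[OF that]]] by simp
  have Bi: "area (hypo g (c i) (d i)) = integral {c i..d i} g" if "i \<in> {1..k}" for i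
    using integral_unique[OF area_int[OF cd cgi[OF that] pgi[OF that]]] by simp
  have sA: "(\<Sum>i\<in>{1..k}. area (hypo f (a i) (b i))) = area (hypo f 0 m)"
  proof -
    have "(\<Sum>i\<in>{1..k}. area (hypo f (a i) (b i))) = (\<Sum>i\<in>{1..k}. integral {a i..b i} f)"
      using Ai by simp
    also have "\<dots> = integral {0 .. real k * m / real k} f"
      unfolding a_def b_def
      by (rule sum_integral_parts) (use IA mp k1 in auto)
    also have "\<dots> = area (hypo f 0 m)" using kpos integral_unique[OF IA] by simp
    finally show ?thesis .
  qed
  have sB: "(\<Sum>i\<in>{1..k}. area (hypo g (c i) (d i))) = area (hypo g 0 n)"
  proof -
    have "(\<Sum>i\<in>{1..k}. area (hypo g (c i) (d i))) = (\<Sum>i\<in>{1..k}. integral {c i..d i} g)"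
      using Bi by simp
    also have "\<dots> = integral {0 .. real k * n / real k} g"
      unfolding c_def d_def
      by (rule sum_integral_parts) (use IB np k1 in auto)
    also have "\<dots> = area (hypo g 0 n)" using kpos integral_unique[OF IB] by simp
    finally show ?thesis .
  qed
  have sumR: "(\<Sum>i\<in>{1..k}. R i) = area (minksum (hypo f 0 m) (hypo g 0 n))"
  proof -
    have "(\<Sum>i\<in>{1..k}. R i) = ((\<Sum>i\<in>{1..k}. area (hypo f (a i) (b i))) / (m / real k)
       + (\<Sum>i\<in>{1..k}. area (hypo g (c i) (d i))) / (n / real k)) * (m / real k + n / real k)"
      unfolding R_def by (simp only: sum_divide_distrib sum.distrib[symmetric] sum_distrib_right)
    also have "\<dots> = (area (hypo f 0 m) / m + area (hypo g 0 n) / n) * (m + n)"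
      unfolding sA sB using kpos mp np by (simp add: field_simps)
    finally show ?thesis using hyp by simp
  qed
  have "(\<Sum>i\<in>{1..k}. area (P i) - R i) = 0"
  proof -
    have "(\<Sum>i\<in>{1..k}. area (P i) - R i) \<le> 0" using sumP sumR by (simp add: sum_subtractf)
    moreover have "(\<Sum>i\<in>{1..k}. area (P i) - R i) \<ge> 0" using PR by (intro sum_nonneg) auto
    ultimately show ?thesis by linarith
  qed
  then have "\<forall>i\<in>{1..k}. area (P i) - R i = 0"
    by (subst (asm) sum_nonneg_eq_0_iff) (use PR in auto)
  then show ?thesis unfolding P_def R_def a_def b_def c_def d_def by simp
qed

end
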